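(* Let $D$ be a finite digraph and let $\mathcal{S}=\{S_1,\dots,S_t\}$ be a greedy dicoloring of $D$. Then there exists a good path partition of $D$ with respect to $\mathcal{S}$.
   Context: A greedy dicoloring of $D$ is a partition $\mathcal{S}=\{S_1,\dots,S_t\}$ of $V(D)$ such that $S_1$ is a maximum-size vertex set inducing an acyclic subdigraph of $D$, and for each $i\in\{2,\dots,t\}$, $S_i$ is a maximum-size vertex set inducing an acyclic subdigraph of $D-\bigcup_{j=1}^{i-1}S_j$. A path partition of $D$ is a collection of vertex-disjoint directed paths covering $V(D)$. A good path partition with respect to $\mathcal{S}$ is a path partition $\mathcal{P}$ of $D$ such that for every path $(v_1,\dots,v_\ell)\in\mathcal{P}$ and every $i\in\{1,\dots,\ell\}$, $v_i\in S_i$. *)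

theory Defs
  imports Main
begin

text \<open>A finite digraph is given by a vertex set V and an arc relation A with
  A \<subseteq> V \<times> V and no loops.  Parallel arcs play no role.\<close>

definition digraph :: "'a set \<Rightarrow> ('a \<times> 'a) set \<Rightarrow> bool" where
  "digraph V A \<longleftrightarrow> A \<subseteq> V \<times> V \<and> (\<forall>v. (v, v) \<notin> A)"

definition induces_acyclic :: "('a \<times> 'a) set \<Rightarrow> 'a set \<Rightarrow> bool" where
  "induces_acyclic A S \<longleftrightarrow> acyclic (A \<inter> (S \<times> S))"

definition max_acyclic_set :: "'a set \<Rightarrow> ('a \<times> 'a) set \<Rightarrow> 'a set \<Rightarrow> bool" where
  "max_acyclic_set U A S \<longleftrightarrow> S \<subseteq> U \<and> induces_acyclic A S \<and>
     (\<forall>T. T \<subseteq> U \<and> induces_acyclic A T \<longrightarrow> card T \<le> card S)"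

text \<open>A greedy dicoloring, given as the list [S_1, ..., S_t] (0-indexed):
  a partition of V into nonempty parts, where S_i is a maximum acyclic set of
  D minus the union of the previous parts.\<close>
definition greedy_dicoloring :: "'a set \<Rightarrow> ('a \<times> 'a) set \<Rightarrow> 'a set list \<Rightarrow> bool" where
  "greedy_dicoloring V A Ss \<longleftrightarrow>
     (\<forall>i < length Ss. Ss ! i \<noteq> {}) \<and>
     (\<forall>i < length Ss. \<forall>j < length Ss. i \<noteq> j \<longrightarrow> Ss ! i \<inter> Ss ! j = {}) \<and>
     \<Union> (set Ss) = V \<and>
     (\<forall>i < length Ss. max_acyclic_set (V - \<Union> (set (take i Ss))) A (Ss ! i))"

definition dipath :: "'a set \<Rightarrow> ('a \<times> 'a) set \<Rightarrow> 'a list \<Rightarrow> bool" where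
  "dipath V A p \<longleftrightarrow> p \<noteq> [] \<and> distinct p \<and> set p \<subseteq> V \<and>
     (\<forall>i. Suc i < length p \<longrightarrow> (p ! i, p ! Suc i) \<in> A)"

definition path_partition :: "'a set \<Rightarrow> ('a \<times> 'a) set \<Rightarrow> 'a list set \<Rightarrow> bool" where
  "path_partition V A P \<longleftrightarrow>
     (\<forall>p \<in> P. dipath V A p) \<and>
     (\<forall>p \<in> P. \<forall>q \<in> P. p \<noteq> q \<longrightarrow> set p \<inter> set q = {}) \<and>
     (\<Union>p \<in> P. set p) = V"

text \<open>Good path partition w.r.t. Ss: the i-th vertex of every path lies in the
  i-th colour class (both 0-indexed here).\<close>
definition good_path_partition ::
  "'a set \<Rightarrow> ('a \<times> 'a) set \<Rightarrow> 'a set list \<Rightarrow> 'a list set \<Rightarrow> bool" where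
  "good_path_partition V A Ss P \<longleftrightarrow> path_partition V A P \<and>
     (\<forall>p \<in> P. length p \<le> length Ss \<and> (\<forall>i < length p. p ! i \<in> Ss ! i))"

end

theory Submission
  imports Defs
begin


lemma hall:
  assumes "finite I" "\<forall>x\<in>I. finite (N x)" "\<forall>X\<subseteq>I. card X \<le> card (\<Union>(N ` X))"
  shows "\<exists>f. inj_on f I \<and> (\<forall>x\<in>I. f x \<in> N x)"
  using assms
proof (induction "card I" arbitrary: I N rule: less_induct)
  case less
  note fin = less.prems(1) and finN = less.prems(2) and cond = less.prems(3)
  have finU: "finite (\<Union>(N ` X))" if "X \<subseteq> I" for X
    using that fin finN by (intro finite_UN_I) (auto intro: finite_subset)
  show ?case
  proof (cases "I = {}")
    case True then show ?thesis by auto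
  next
    case False
    show ?thesis
    proof (cases "\<exists>X. X \<subseteq> I \<and> X \<noteq> {} \<and> X \<noteq> I \<and> card (\<Union>(N ` X)) = card X")
      case True
      then obtain X where X: "X \<subseteq> I" "X \<noteq> {}" "X \<noteq> I" "card (\<Union>(N ` X)) = card X" by blast
      have finX: "finite X" by (rule finite_subset[OF X(1) fin])
      have "X \<subset> I" using X(1,3) by blast
      then have "card X < card I" by (rule psubset_card_mono[OF fin])
      moreover have "\<forall>x\<in>X. finite (N x)" using finN X by blast
      moreover have "\<forall>Y\<subseteq>X. card Y \<le> card (\<Union>(N ` Y))" using cond X(1) by (meson subset_trans)
      ultimately have "\<exists>f. inj_on f X \<and> (\<forall>x\<in>X. f x \<in> N x)"
        by (rule less.hyps[OF _ finX])
      then obtain f1 where f1: "inj_on f1 X" "\<forall>x\<in>X. f1 x \<in> N x" by blast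
      define N' where "N' = (\<lambda>x. N x - \<Union>(N ` X))"
      have lt2: "card (I - X) < card I"
      proof -
        have "card X > 0" using finX X(2) by (simp add: card_gt_0_iff)
        then show ?thesis using fin X finX \<open>card X < card I\<close> by (simp add: card_Diff_subset)
      qed
      have cond2: "\<forall>Y\<subseteq>I-X. card Y \<le> card (\<Union>(N' ` Y))"
      proof (intro allI impI)
        fix Y assume Y: "Y \<subseteq> I - X"
        have finY: "finite Y" by (rule finite_subset[OF Y]) (simp add: fin)
        have eq: "\<Union>(N' ` Y) = \<Union>(N ` (X \<union> Y)) - \<Union>(N ` X)" by (auto simp: N'_def)
        have sub: "\<Union>(N ` X) \<subseteq> \<Union>(N ` (X \<union> Y))" by auto
        have "card (\<Union>(N' ` Y)) = card (\<Union>(N ` (X \<union> Y))) - card (\<Union>(N ` X))"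
          unfolding eq using sub finU[of X] X(1) by (simp add: card_Diff_subset)
        moreover have "X \<union> Y \<subseteq> I" using X(1) Y by blast
        then have "card (X \<union> Y) \<le> card (\<Union>(N ` (X \<union> Y)))" by (rule cond[rule_format])
        moreover have "card (X \<union> Y) = card X + card Y"
          using Y finX finY by (subst card_Un_disjoint) auto
        ultimately show "card Y \<le> card (\<Union>(N' ` Y))" using X(4) by simp
      qed
      have "\<forall>x\<in>I-X. finite (N' x)" using finN by (auto simp: N'_def)
      moreover have "finite (I - X)" using fin by simp
      ultimately have "\<exists>f. inj_on f (I - X) \<and> (\<forall>x\<in>I-X. f x \<in> N' x)"
        using less.hyps[OF lt2 _ _ cond2] by blast
      then obtain f2 where f2: "inj_on f2 (I - X)" "\<forall>x\<in>I-X. f2 x \<in> N' x" by blast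
      define f where "f x = (if x \<in> X then f1 x else f2 x)" for x
      have "inj_on f I"
        unfolding inj_on_def
      proof (intro ballI impI)
        fix a b assume ab: "a \<in> I" "b \<in> I" "f a = f b"
        show "a = b"
        proof (cases "a \<in> X"; cases "b \<in> X")
          assume "a \<in> X" "b \<in> X" then show ?thesis using ab f1 by (auto simp: f_def inj_on_def)
        next
          assume "a \<notin> X" "b \<notin> X" then show ?thesis using ab f2 by (auto simp: f_def inj_on_def)
        next
          assume "a \<in> X" "b \<notin> X" then show ?thesis using ab f1 f2 unfolding f_def N'_def by (metis Diff_iff UN_I)
        next
          assume "a \<notin> X" "b \<in> X" then show ?thesis using ab f1 f2 unfolding f_def N'_def by (metis Diff_iff UN_I)
        qed
      qed
      moreover have "\<forall>x\<in>I. f x \<in> N x" using f1 f2 by (auto simp: f_def N'_def)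
      ultimately show ?thesis by blast
    next
      case False
      have strict: "card X < card (\<Union>(N ` X))" if "X \<subseteq> I" "X \<noteq> {}" "X \<noteq> I" for X
      proof -
        have "card X \<le> card (\<Union>(N ` X))" using cond that(1) by blast
        moreover have "card (\<Union>(N ` X)) \<noteq> card X" using False that by blast
        ultimately show ?thesis by linarith
      qed
      obtain x where x: "x \<in> I" using \<open>I \<noteq> {}\<close> by blast
      have c1: "1 \<le> card (N x)" using cond[rule_format, of "{x}"] x by simp
      then have "N x \<noteq> {}" by (cases "N x = {}") simp_all
      then obtain y where y: "y \<in> N x" by blast
      define N' where "N' = (\<lambda>z. N z - {y})"
      have lt2: "card (I - {x}) < card I" by (rule card_Diff1_less[OF fin x])
      have cond2: "\<forall>Y\<subseteq>I-{x}. card Y \<le> card (\<Union>(N' ` Y))"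
      proof (intro allI impI)
        fix Y assume Y: "Y \<subseteq> I - {x}"
        show "card Y \<le> card (\<Union>(N' ` Y))"
        proof (cases "Y = {}")
          case True then show ?thesis by simp
        next
          case False
          have "card Y < card (\<Union>(N ` Y))" using strict[of Y] Y x False by blast
          moreover have "\<Union>(N' ` Y) = \<Union>(N ` Y) - {y}" by (auto simp: N'_def)
          moreover have "card (\<Union>(N ` Y)) \<le> card (\<Union>(N ` Y) - {y}) + 1"
            using finU[of Y] Y by (cases "y \<in> \<Union>(N ` Y)") (auto simp: card_Diff_singleton_if)
          ultimately show ?thesis by simp
        qed
      qed
      have "\<forall>z\<in>I-{x}. finite (N' z)" using finN by (auto simp: N'_def)
      moreover have "finite (I - {x})" using fin by simp
      ultimately have "\<exists>f. inj_on f (I - {x}) \<and> (\<forall>z\<in>I-{x}. f z \<in> N' z)"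
        using less.hyps[OF lt2 _ _ cond2] by blast
      then obtain f2 where f2: "inj_on f2 (I - {x})" "\<forall>z\<in>I-{x}. f2 z \<in> N' z" by blast
      define f where "f = f2(x := y)"
      have "inj_on f (insert x (I - {x}))"
        using f2 by (auto simp: f_def N'_def inj_on_def)
      moreover have "insert x (I - {x}) = I" using x by blast
      moreover have "\<forall>z\<in>I. f z \<in> N z" using f2 y by (auto simp: f_def N'_def)
      ultimately show ?thesis by metis
    qed
  qed
qed



lemma acyc_combine:
  assumes a1: "acyclic (A \<inter> (P \<times> P))" and a2: "acyclic (A \<inter> (Q \<times> Q))"
    and d: "P \<inter> Q = {}" and na: "\<forall>u\<in>P. \<forall>v\<in>Q. (u, v) \<notin> A"
  shows "acyclic (A \<inter> ((P \<union> Q) \<times> (P \<union> Q)))"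
proof -
  let ?R = "A \<inter> ((P \<union> Q) \<times> (P \<union> Q))"
  let ?R1 = "A \<inter> (P \<times> P)" and ?R2 = "A \<inter> (Q \<times> Q)"
  have claim: "(x \<in> P \<and> y \<in> P \<and> (x, y) \<in> ?R1\<^sup>+) \<or> (x \<in> Q \<and> y \<in> Q \<and> (x, y) \<in> ?R2\<^sup>+) \<or> (x \<in> Q \<and> y \<in> P)"
    if "(x, y) \<in> ?R\<^sup>+" for x y
    using that
  proof (induction rule: trancl_induct)
    case (base y)
    then show ?case using na by blast
  next
    case (step y z)
    then show ?case using na by (blast intro: trancl_into_trancl)
  qed
  show ?thesis
    unfolding acyclic_def
  proof
    fix x show "(x, x) \<notin> ?R\<^sup>+"
    proof
      assume "(x, x) \<in> ?R\<^sup>+"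
      from claim[OF this] show False using a1 a2 d unfolding acyclic_def by blast
    qed
  qed
qed

theorem mainTheorem5:
  fixes V :: "'a set" and A :: "('a \<times> 'a) set" and Ss :: "'a set list"
  assumes "finite V" and "digraph V A" and "greedy_dicoloring V A Ss"
  shows "\<exists>P. good_path_partition V A Ss P"
proof -
  define n where "n = length Ss"
  define S where "S i = Ss ! i" for i
  note G = assms(3)[unfolded greedy_dicoloring_def]
  have g2: "\<forall>i < length Ss. \<forall>j < length Ss. i \<noteq> j \<longrightarrow> Ss ! i \<inter> Ss ! j = {}"
    using G by (elim conjE)
  have cov: "\<Union> (set Ss) = V" using G by (elim conjE)
  have g4: "\<forall>i < length Ss. max_acyclic_set (V - \<Union> (set (take i Ss))) A (Ss ! i)"
    using G by (elim conjE)
  have disj: "S i \<inter> S j = {}" if "i < n" "j < n" "i \<noteq> j" for i j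
    using g2 that unfolding S_def n_def by simp
  have maxac: "max_acyclic_set (V - \<Union> (set (take i Ss))) A (S i)" if "i < n" for i
    using g4 that unfolding S_def n_def by simp
  have SV: "S i \<subseteq> V" if "i < n" for i
  proof -
    have "Ss ! i \<in> set Ss" using that unfolding n_def by simp
    then show ?thesis using cov unfolding S_def by blast
  qed
  have uniq: "i = j" if "i < n" "j < n" "v \<in> S i" "v \<in> S j" for i j v
    using disj[of i j] that by blast
  have match: "\<exists>f. inj_on f (S (Suc i)) \<and> (\<forall>v\<in>S (Suc i). f v \<in> S i \<and> (f v, v) \<in> A)"
    if si: "Suc i < n" for i
  proof -
    define N where "N v = {u \<in> S i. (u, v) \<in> A}" for v
    have finSi: "finite (S i)" by (rule finite_subset[OF SV assms(1)]) (use si in simp)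
    have finS: "finite (S (Suc i))" by (rule finite_subset[OF SV assms(1)]) (use si in simp)
    have hc: "\<forall>X\<subseteq>S (Suc i). card X \<le> card (\<Union>(N ` X))"
    proof (intro allI impI)
      fix X assume X: "X \<subseteq> S (Suc i)"
      show "card X \<le> card (\<Union>(N ` X))"
      proof (rule ccontr)
        assume lt: "\<not> card X \<le> card (\<Union>(N ` X))"
        define NX where "NX = \<Union>(N ` X)"
        define T where "T = (S i - NX) \<union> X"
        have NXs: "NX \<subseteq> S i" unfolding NX_def N_def by auto
        have finX: "finite X" by (rule finite_subset[OF X finS])
        have "S i \<inter> S (Suc i) = {}" using disj[of i "Suc i"] si by simp
        then have dX: "(S i - NX) \<inter> X = {}" using X by blast
        have m1: "max_acyclic_set (V - \<Union> (set (take i Ss))) A (S i)" using maxac si by simp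
        have m2: "max_acyclic_set (V - \<Union> (set (take (Suc i) Ss))) A (S (Suc i))" using maxac si by simp
        have "set (take i Ss) \<subseteq> set (take (Suc i) Ss)" by (simp add: set_take_subset_set_take)
        moreover have "S i \<subseteq> V - \<Union> (set (take i Ss))" using m1 unfolding max_acyclic_set_def by (elim conjE)
        moreover have "S (Suc i) \<subseteq> V - \<Union> (set (take (Suc i) Ss))" using m2 unfolding max_acyclic_set_def by (elim conjE)
        ultimately have TU: "T \<subseteq> V - \<Union> (set (take i Ss))"
          using X unfolding T_def by blast
        have "induces_acyclic A T"
          unfolding T_def induces_acyclic_def
        proof (rule acyc_combine)
          show "acyclic (A \<inter> ((S i - NX) \<times> (S i - NX)))"
          proof -
            have "acyclic (A \<inter> (S i \<times> S i))" using m1 unfolding max_acyclic_set_def induces_acyclic_def by (elim conjE)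
            then show ?thesis by (rule acyclic_subset) blast
          qed
          show "acyclic (A \<inter> (X \<times> X))"
          proof -
            have "acyclic (A \<inter> (S (Suc i) \<times> S (Suc i)))" using m2 unfolding max_acyclic_set_def induces_acyclic_def by (elim conjE)
            then show ?thesis by (rule acyclic_subset) (use X in blast)
          qed
          show "(S i - NX) \<inter> X = {}" by (rule dX)
          show "\<forall>u\<in>S i - NX. \<forall>v\<in>X. (u, v) \<notin> A" unfolding NX_def N_def by blast
        qed
        moreover have "\<forall>T. T \<subseteq> V - \<Union> (set (take i Ss)) \<and> induces_acyclic A T \<longrightarrow> card T \<le> card (S i)"
          using m1 unfolding max_acyclic_set_def by (elim conjE)
        ultimately have "card T \<le> card (S i)" using TU by blast
        moreover have "card T = card (S i) - card NX + card X"
          unfolding T_def using dX finX finSi NXs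
          by (simp add: card_Un_disjoint card_Diff_subset finite_subset)
        moreover have "card NX \<le> card (S i)" using NXs finSi card_mono by blast
        ultimately show False using lt unfolding NX_def by linarith
      qed
    qed
    have "\<forall>x\<in>S (Suc i). finite (N x)" unfolding N_def using finSi by auto
    from hall[OF finS this hc] obtain f where "inj_on f (S (Suc i))" "\<forall>x\<in>S (Suc i). f x \<in> N x"
      by blast
    then show ?thesis unfolding N_def by blast
  qed
  have "\<forall>i. \<exists>f. Suc i < n \<longrightarrow> inj_on f (S (Suc i)) \<and> (\<forall>v\<in>S (Suc i). f v \<in> S i \<and> (f v, v) \<in> A)"
    using match by blast
  from choice[OF this] obtain F where F0: "\<forall>i. Suc i < n \<longrightarrow> inj_on (F i) (S (Suc i)) \<and> (\<forall>v\<in>S (Suc i). F i v \<in> S i \<and> (F i v, v) \<in> A)"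
    by blast
  have F: "inj_on (F i) (S (Suc i)) \<and> (\<forall>v\<in>S (Suc i). F i v \<in> S i \<and> (F i v, v) \<in> A)" if "Suc i < n" for i
    using F0 that by blast
  define lev where "lev v = (SOME i. i < n \<and> v \<in> S i)" for v
  define pred where "pred v = F (lev v - 1) v" for v
  have levI: "lev v = i" if "i < n" "v \<in> S i" for i v
  proof -
    have "lev v < n \<and> v \<in> S (lev v)" unfolding lev_def by (rule someI[of _ i]) (use that in blast)
    then show ?thesis using uniq that by blast
  qed
  have predI: "pred v = F i v" if "Suc i < n" "v \<in> S (Suc i)" for i v
    using levI[OF that] unfolding pred_def by simp
  have predS: "pred v \<in> S i" "(pred v, v) \<in> A" if "Suc i < n" "v \<in> S (Suc i)" for i v
    using predI[OF that] F[OF that(1)] that(2) by auto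
  have pow: "(pred ^^ k) v \<in> S (m - k)" if "k \<le> m" "m < n" "v \<in> S m" for k m v
    using that
  proof (induction k)
    case 0 then show ?case by simp
  next
    case (Suc k)
    then have h: "(pred ^^ k) v \<in> S (Suc (m - Suc k))" by (simp add: Suc_diff_Suc)
    have "Suc (m - Suc k) < n" using Suc.prems by linarith
    from predS(1)[OF this h] show ?case by simp
  qed
  have powinj: "a = b" if "k \<le> m" "m < n" "a \<in> S m" "b \<in> S m" "(pred ^^ k) a = (pred ^^ k) b"
    for k m a b
    using that
  proof (induction k arbitrary: m a b)
    case 0 then show ?case by simp
  next
    case (Suc k)
    then obtain m' where m': "m = Suc m'" by (cases m) auto
    have "Suc m' < n" using Suc.prems m' by simp
    have pa: "pred a = F m' a" "pred a \<in> S m'" using predI predS Suc.prems m' \<open>Suc m' < n\<close> by auto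
    have pb: "pred b = F m' b" "pred b \<in> S m'" using predI predS Suc.prems m' \<open>Suc m' < n\<close> by auto
    have "(pred ^^ k) (pred a) = (pred ^^ k) (pred b)"
      using Suc.prems(5) by (simp add: funpow_Suc_right del: funpow.simps)
    then have "pred a = pred b" using Suc.IH[of m' "pred a" "pred b"] Suc.prems m' pa pb by simp
    then show ?case using F[OF \<open>Suc m' < n\<close>] pa pb Suc.prems m' by (simp add: inj_on_def)
  qed
  define terminal where "terminal v \<longleftrightarrow> \<not> (\<exists>u i. Suc i < n \<and> u \<in> S (Suc i) \<and> pred u = v)" for v
  define bk where "bk m v = map (\<lambda>j. (pred ^^ (m - j)) v) [0..<Suc m]" for m v
  define P where "P = {bk m v | m v. m < n \<and> v \<in> S m \<and> terminal v}"
  have bk_nth_eq: "bk m v ! j = (pred ^^ (m - j)) v" if "j \<le> m" for m v j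
    unfolding bk_def using that by (simp add: nth_map_upt del: upt_Suc)
  have bk_nth: "bk m v ! j \<in> S j" if "j \<le> m" "m < n" "v \<in> S m" for j m v
    using pow[of "m - j" m v] that bk_nth_eq[of j m v] by simp
  have bk_len: "length (bk m v) = Suc m" for m v unfolding bk_def by simp
  have dip: "dipath V A (bk m v)" if "m < n" "v \<in> S m" for m v
    unfolding dipath_def
  proof (intro conjI allI impI)
    show "bk m v \<noteq> []" unfolding bk_def by simp
    show "distinct (bk m v)"
      unfolding distinct_conv_nth bk_len
    proof (intro allI impI)
      fix i j assume ij: "i < Suc m" "j < Suc m" "i \<noteq> j"
      show "bk m v ! i \<noteq> bk m v ! j"
        using bk_nth[of i m v] bk_nth[of j m v] that ij uniq[of i j] by force
    qed
    show "set (bk m v) \<subseteq> V"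
    proof
      fix x assume "x \<in> set (bk m v)"
      then obtain j where "j < Suc m" "x = bk m v ! j" by (auto simp: in_set_conv_nth bk_len)
      then show "x \<in> V" using bk_nth[of j m v] SV[of j] that by auto
    qed
    fix i assume i: "Suc i < length (bk m v)"
    then have im: "Suc i \<le> m" by (simp add: bk_len)
    define w where "w = (pred ^^ (m - Suc i)) v"
    have w: "w \<in> S (Suc i)" using pow[of "m - Suc i" m v] im that unfolding w_def by simp
    have "bk m v ! i = pred w" unfolding bk_def w_def using im
      by (simp add: nth_map_upt Suc_diff_Suc[symmetric] del: upt_Suc)
    moreover have "bk m v ! Suc i = w" unfolding bk_def w_def using im
      by (simp add: nth_map_upt del: upt_Suc)
    moreover have "Suc i < n" using im that by linarith
    ultimately show "(bk m v ! i, bk m v ! Suc i) \<in> A" using predS(2) w by simp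
  qed
  have meet: "m = m' \<and> v = w"
    if "m \<le> m'" "m' < n" "v \<in> S m" "w \<in> S m'" "terminal v" "j \<le> m"
       "(pred ^^ (m - j)) v = (pred ^^ (m' - j)) w" for m m' v w j
  proof -
    define w' where "w' = (pred ^^ (m' - m)) w"
    have "m' - j = (m - j) + (m' - m)" using that by linarith
    then have "(pred ^^ (m' - j)) w = (pred ^^ (m - j)) w'" unfolding w'_def by (simp add: funpow_add)
    moreover have w'S: "w' \<in> S m" using pow[of "m' - m" m' w] that unfolding w'_def by simp
    ultimately have vw: "v = w'" using powinj[of "m - j" m v w'] that by simp
    show ?thesis
    proof (cases "m = m'")
      case True then show ?thesis using vw unfolding w'_def by simp
    next
      case False
      define u where "u = (pred ^^ (m' - Suc m)) w"
      have u: "u \<in> S (Suc m)" using pow[of "m' - Suc m" m' w] that False unfolding u_def by simp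
      have "m' - m = Suc (m' - Suc m)" using that False by linarith
      then have "pred u = w'" unfolding u_def w'_def by simp
      moreover have "Suc m < n" using that False by linarith
      ultimately show ?thesis using u vw \<open>terminal v\<close> unfolding terminal_def by blast
    qed
  qed
  have pp: "path_partition V A P"
    unfolding path_partition_def
  proof (intro conjI)
    show "\<forall>p\<in>P. dipath V A p" unfolding P_def using dip by blast
    show "\<forall>p\<in>P. \<forall>q\<in>P. p \<noteq> q \<longrightarrow> set p \<inter> set q = {}"
    proof (intro ballI impI)
      fix p q assume p: "p \<in> P" and q: "q \<in> P" and pq: "p \<noteq> q"
      obtain m v where mv: "p = bk m v" "m < n" "v \<in> S m" "terminal v" using p unfolding P_def by blast
      obtain m' w where mw: "q = bk m' w" "m' < n" "w \<in> S m'" "terminal w" using q unfolding P_def by blast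
      show "set p \<inter> set q = {}"
      proof (rule ccontr)
        assume "set p \<inter> set q \<noteq> {}"
        then obtain x where "x \<in> set p" "x \<in> set q" by blast
        then obtain j j' where j: "j < Suc m" "x = bk m v ! j" and j': "j' < Suc m'" "x = bk m' w ! j'"
          using mv mw by (auto simp: in_set_conv_nth bk_len)
        have "j = j'" using bk_nth[of j m v] bk_nth[of j' m' w] mv mw j j' uniq[of j j'] by force
        then have eq: "(pred ^^ (m - j)) v = (pred ^^ (m' - j)) w"
          using j j' bk_nth_eq by auto
        have "m = m' \<and> v = w"
        proof (cases "m \<le> m'")
          case True then show ?thesis using meet[of m m' v w j] mv mw j eq by auto
        next
          case False then show ?thesis using meet[of m' m w v j] mv mw j' \<open>j = j'\<close> eq by auto
        qed
        then show False using pq mv mw by simp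
      qed
    qed
    show "(\<Union>p\<in>P. set p) = V"
    proof
      show "(\<Union>p\<in>P. set p) \<subseteq> V"
      proof (rule UN_least)
        fix p assume "p \<in> P"
        then have "dipath V A p" using \<open>\<forall>p\<in>P. dipath V A p\<close> by blast
        then show "set p \<subseteq> V" unfolding dipath_def by (elim conjE)
      qed
      show "V \<subseteq> (\<Union>p\<in>P. set p)"
      proof
        fix x assume "x \<in> V"
        then have "x \<in> \<Union> (set Ss)" using cov by simp
        then obtain s where s: "s \<in> set Ss" "x \<in> s" by blast
        then obtain j where "j < length Ss" "Ss ! j = s" by (auto simp: in_set_conv_nth)
        then have j: "j < n" "x \<in> S j" using s unfolding S_def n_def by auto
        define K where "K = {k. \<exists>w. j + k < n \<and> w \<in> S (j + k) \<and> (pred ^^ k) w = x}"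
        have "0 \<in> K" unfolding K_def using j by auto
        have finK: "finite K" unfolding K_def by (rule finite_subset[of _ "{..<n}"]) auto
        define k where "k = Max K"
        have "k \<in> K" unfolding k_def using finK \<open>0 \<in> K\<close> by (intro Max_in) auto
        then obtain w where w: "j + k < n" "w \<in> S (j + k)" "(pred ^^ k) w = x" unfolding K_def by blast
        have tw: "terminal w"
          unfolding terminal_def
        proof
          assume "\<exists>u i. Suc i < n \<and> u \<in> S (Suc i) \<and> pred u = w"
          then obtain u i where u: "Suc i < n" "u \<in> S (Suc i)" "pred u = w" by blast
          have "i < n" using u(1) by simp
          have "i = j + k" using uniq[OF \<open>i < n\<close> w(1) _ w(2)] predS(1)[OF u(1,2)] u(3) by simp
          have "(pred ^^ Suc k) u = x" using u(3) w(3) by (simp add: funpow_Suc_right del: funpow.simps)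
          then have "Suc k \<in> K" unfolding K_def using u \<open>i = j + k\<close> by auto
          then have "Suc k \<le> k" unfolding k_def by (rule Max_ge[OF finK])
          then show False by simp
        qed
        have "bk (j + k) w \<in> P" unfolding P_def using w tw by blast
        moreover have "bk (j + k) w ! j = x" using bk_nth_eq[of j "j + k" w] w by simp
        moreover have "j < length (bk (j + k) w)" by (simp add: bk_len)
        ultimately show "x \<in> (\<Union>p\<in>P. set p)" by (metis UN_I nth_mem)
      qed
    qed
  qed
  have "\<forall>p\<in>P. length p \<le> length Ss \<and> (\<forall>i < length p. p ! i \<in> Ss ! i)"
  proof
    fix p assume "p \<in> P"
    then obtain m v where mv: "p = bk m v" "m < n" "v \<in> S m" unfolding P_def by blast
    then show "length p \<le> length Ss \<and> (\<forall>i < length p. p ! i \<in> Ss ! i)"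
      using bk_nth[of _ m v] unfolding n_def S_def by (auto simp: bk_len)
  qed
  then have "good_path_partition V A Ss P" using pp unfolding good_path_partition_def by blast
  then show ?thesis by blast
qed

end
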